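(* Let $P$ be a set of $n$ points in the plane, no three collinear and no two on a common horizontal line. As $\beta$ runs from $0$ to $\pi$, the total number of events (insertion, deletion, overlap and release events) of $\mathcal{O}_\beta\mathcal{H}(P)$ is $O(n)$.
   Context: For $\beta\in(0,\pi)$, $\mathcal{O}_\beta$ is the pair of lines through the origin with slopes $0$ and $\tan\beta$. Given an apex $a$, every point is uniquely $a+s(1,0)+t(\cos\beta,\sin\beta)$; the four $\mathcal{O}_\beta$-quadrants with apex $a$ are the open sets with $s>0,t>0$ (top-right), $s<0,t>0$ (top-left), $s>0,t<0$ (bottom-right), $s<0,t<0$ (bottom-left); top-right/bottom-left and top-left/bottom-right are opposite pairs. A quadrant is $P$-free if it contains no point of $P$, and $\mathcal{O}_\beta\mathcal{H}(P)$ is the plane minus the union of all $P$-free $\mathcal{O}_\beta$-quadrants. For each quadrant type, the points of $P$ that are apices of a $P$-free quadrant of that type are the vertices of the corresponding $\mathcal{O}_\beta$-staircase. A maximal $\mathcal{O}_\beta$-quadrant is a $P$-free $\mathcal{O}_\beta$-quadrant each of whose two boundary rays contains a point of $P$; an overlapping region is a nonempty intersection of two opposite maximal quadrants (identified by the points of $P$ supporting the two quadrants). An insertion (resp. deletion) event is a value of $\beta$ at which a point of $P$ becomes (resp. ceases to be) a vertex of one of the four staircases; an overlap (resp. release) event is a value of $\beta$ at which an overlapping region is created (resp. destroyed). *)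

theory Defs
  imports Complex_Main
begin

type_synonym pt = "real \<times> real"

datatype qtype = TR | TL | BR | BL

text \<open>Sign of the s-coordinate (along (1,0)) and of the t-coordinate
  (along (cos beta, sin beta)) inside a quadrant of the given type.\<close>
fun sgn_s :: "qtype \<Rightarrow> real" where
  "sgn_s TR = 1" | "sgn_s TL = -1" | "sgn_s BR = 1" | "sgn_s BL = -1"

fun sgn_t :: "qtype \<Rightarrow> real" where
  "sgn_t TR = 1" | "sgn_t TL = 1" | "sgn_t BR = -1" | "sgn_t BL = -1"

fun opp :: "qtype \<Rightarrow> qtype" where
  "opp TR = BL" | "opp BL = TR" | "opp TL = BR" | "opp BR = TL"

definition quad :: "real \<Rightarrow> qtype \<Rightarrow> pt \<Rightarrow> pt set" where
  "quad \<beta> q a = {p. \<exists>s t. p = (fst a + s + t * cos \<beta>, snd a + t * sin \<beta>)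
                       \<and> sgn_s q * s > 0 \<and> sgn_t q * t > 0}"

definition pfree :: "pt set \<Rightarrow> real \<Rightarrow> qtype \<Rightarrow> pt \<Rightarrow> bool" where
  "pfree P \<beta> q a \<longleftrightarrow> quad \<beta> q a \<inter> P = {}"

definition stair :: "pt set \<Rightarrow> real \<Rightarrow> qtype \<Rightarrow> pt set" where
  "stair P \<beta> q = {p \<in> P. pfree P \<beta> q p}"

definition hray :: "qtype \<Rightarrow> pt \<Rightarrow> pt set" where
  "hray q a = {(fst a + s, snd a) | s. sgn_s q * s > 0}"

definition sray :: "real \<Rightarrow> qtype \<Rightarrow> pt \<Rightarrow> pt set" where
  "sray \<beta> q a = {(fst a + t * cos \<beta>, snd a + t * sin \<beta>) | t. sgn_t q * t > 0}"

definition maxquad :: "pt set \<Rightarrow> real \<Rightarrow> qtype \<Rightarrow> pt \<Rightarrow> pt \<Rightarrow> pt \<Rightarrow> bool" where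
  "maxquad P \<beta> q a p1 p2 \<longleftrightarrow> pfree P \<beta> q a \<and> p1 \<in> P \<and> p2 \<in> P
      \<and> p1 \<in> hray q a \<and> p2 \<in> sray \<beta> q a"

text \<open>Overlapping regions at beta, identified by the quadrant type of the first
  (top) quadrant and the four supporting points.\<close>
definition overlaps :: "pt set \<Rightarrow> real \<Rightarrow> (qtype \<times> pt \<times> pt \<times> pt \<times> pt) set" where
  "overlaps P \<beta> = {(q, p1, p2, p3, p4) | q p1 p2 p3 p4. q \<in> {TR, TL} \<and>
      (\<exists>a b. maxquad P \<beta> q a p1 p2 \<and> maxquad P \<beta> (opp q) b p3 p4
             \<and> quad \<beta> q a \<inter> quad \<beta> (opp q) b \<noteq> {})}"

definition insdel_events :: "pt set \<Rightarrow> (real \<times> pt \<times> qtype) set" where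
  "insdel_events P = {(\<beta>, p, q) | \<beta> p q. 0 < \<beta> \<and> \<beta> < pi \<and> p \<in> P \<and>
     ((eventually (\<lambda>b. p \<notin> stair P b q) (at_left \<beta>) \<and>
       eventually (\<lambda>b. p \<in> stair P b q) (at_right \<beta>)) \<or>
      (eventually (\<lambda>b. p \<in> stair P b q) (at_left \<beta>) \<and>
       eventually (\<lambda>b. p \<notin> stair P b q) (at_right \<beta>)))}"

definition ovrel_events :: "pt set \<Rightarrow> (real \<times> (qtype \<times> pt \<times> pt \<times> pt \<times> pt)) set" where
  "ovrel_events P = {(\<beta>, X) | \<beta> X. 0 < \<beta> \<and> \<beta> < pi \<and>
     ((eventually (\<lambda>b. X \<notin> overlaps P b) (at_left \<beta>) \<and>
       eventually (\<lambda>b. X \<in> overlaps P b) (at_right \<beta>)) \<or>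
      (eventually (\<lambda>b. X \<in> overlaps P b) (at_left \<beta>) \<and>
       eventually (\<lambda>b. X \<notin> overlaps P b) (at_right \<beta>)))}"

definition collinear3 :: "pt \<Rightarrow> pt \<Rightarrow> pt \<Rightarrow> bool" where
  "collinear3 a b c \<longleftrightarrow>
     (fst b - fst a) * (snd c - snd a) - (snd b - snd a) * (fst c - fst a) = 0"

definition general_pos :: "pt set \<Rightarrow> bool" where
  "general_pos P \<longleftrightarrow>
     (\<forall>a\<in>P. \<forall>b\<in>P. \<forall>c\<in>P. a \<noteq> b \<and> a \<noteq> c \<and> b \<noteq> c \<longrightarrow> \<not> collinear3 a b c) \<and>
     (\<forall>a\<in>P. \<forall>b\<in>P. a \<noteq> b \<longrightarrow> snd a \<noteq> snd b)"

end

theory Submission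
  imports Defs
begin


definition F :: "real \<Rightarrow> real \<Rightarrow> pt \<Rightarrow> real" where
  "F \<sigma> t p = \<sigma> * fst p - snd p * cot t"

lemma cot_strict_decr:
  assumes "0 < t1" "t1 < t2" "t2 < pi"
  shows "cot t2 < cot t1"
proof -
  have s1: "sin t1 > 0" using assms by (intro sin_gt_zero) auto
  have s2: "sin t2 > 0" using assms by (intro sin_gt_zero) auto
  have "sin (t2 - t1) > 0" using assms by (intro sin_gt_zero) auto
  hence "sin t2 * cos t1 - cos t2 * sin t1 > 0" by (simp add: sin_diff)
  hence "cos t2 * sin t1 < cos t1 * sin t2" by (simp add: algebra_simps)
  thus ?thesis using s1 s2 by (simp add: cot_def divide_simps)
qed

lemma F_mono:
  assumes "snd u > snd v" "0 < t1" "t1 < t2" "t2 < pi"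
  shows "F s t1 u - F s t1 v < F s t2 u - F s t2 v"
proof -
  have "cot t2 < cot t1" using cot_strict_decr assms by blast
  hence "(snd u - snd v) * cot t2 < (snd u - snd v) * cot t1"
    using assms(1) by (intro mult_strict_left_mono) auto
  thus ?thesis unfolding F_def by (simp add: algebra_simps)
qed

lemma F_tendsto:
  assumes "0 < t" "t < pi"
  shows "((\<lambda>s. F \<sigma> s p) \<longlongrightarrow> F \<sigma> t p) (at t)"
proof -
  have "sin t \<noteq> 0" using assms sin_gt_zero by force
  thus ?thesis unfolding F_def by (auto intro!: tendsto_intros)
qed

lemma F_collinear:
  assumes "\<sigma> = 1 \<or> \<sigma> = -1" "F \<sigma> t p = F \<sigma> t q" "F \<sigma> t p = F \<sigma> t r"
  shows "collinear3 p q r"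
proof -
  define c where "c = cot t"
  have q: "fst q - fst p = \<sigma> * (snd q - snd p) * c"
    using assms unfolding F_def c_def by (auto simp: algebra_simps)
  have r: "fst r - fst p = \<sigma> * (snd r - snd p) * c"
    using assms unfolding F_def c_def by (auto simp: algebra_simps)
  show ?thesis unfolding collinear3_def q r by (simp add: algebra_simps)
qed

lemma F_cot_reflect: "- F 1 b p = F (-1) (pi - b) p"
  unfolding F_def cot_def by simp



lemma quad_iff:
  assumes "0 < b" "b < pi"
  shows "p \<in> quad b q a \<longleftrightarrow> 0 < sgn_s q * (F 1 b p - F 1 b a) \<and> 0 < sgn_t q * (snd p - snd a)"
proof -
  have sp: "sin b > 0" using assms sin_gt_zero by blast
  show ?thesis
  proof
    assume "p \<in> quad b q a"
    then obtain s t where p: "p = (fst a + s + t * cos b, snd a + t * sin b)"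
      and st: "sgn_s q * s > 0" "sgn_t q * t > 0" unfolding quad_def by auto
    have "F 1 b p - F 1 b a = s" using sp unfolding p F_def cot_def by (simp add: field_simps)
    moreover have "snd p - snd a = t * sin b" using p by simp
    hence e: "sgn_t q * (snd p - snd a) = (sgn_t q * t) * sin b" by (simp only: mult.assoc)
    have "0 < sgn_t q * (snd p - snd a)" unfolding e by (rule mult_pos_pos[OF st(2) sp])
    ultimately show "0 < sgn_s q * (F 1 b p - F 1 b a) \<and> 0 < sgn_t q * (snd p - snd a)"
      using st by simp
  next
    assume h: "0 < sgn_s q * (F 1 b p - F 1 b a) \<and> 0 < sgn_t q * (snd p - snd a)"
    define t where "t = (snd p - snd a) / sin b"
    define s where "s = F 1 b p - F 1 b a"
    have "p = (fst a + s + t * cos b, snd a + t * sin b)"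
      using sp unfolding s_def t_def F_def cot_def by (cases p; cases a) (simp add: field_simps)
    moreover have "sgn_s q * s > 0" using h s_def by simp
    moreover have "sgn_t q * t > 0" using h sp unfolding t_def
      by (metis divide_pos_pos times_divide_eq_right)
    ultimately show "p \<in> quad b q a" unfolding quad_def by blast
  qed
qed

lemma hray_iff:
  "p \<in> hray q a \<longleftrightarrow> snd p = snd a \<and> 0 < sgn_s q * (F 1 b p - F 1 b a)"
  unfolding hray_def F_def by (cases p; cases a) (auto intro!: exI[of _ "fst p - fst a"])

lemma sray_iff:
  assumes "0 < b" "b < pi"
  shows "p \<in> sray b q a \<longleftrightarrow> F 1 b p = F 1 b a \<and> 0 < sgn_t q * (snd p - snd a)"
proof -
  have sp: "sin b > 0" using assms sin_gt_zero by blast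
  show ?thesis
  proof
    assume "p \<in> sray b q a"
    then obtain t where p: "p = (fst a + t * cos b, snd a + t * sin b)" and t: "sgn_t q * t > 0"
      unfolding sray_def by auto
    have "F 1 b p = F 1 b a" using sp unfolding p F_def cot_def by (simp add: field_simps)
    moreover have "snd p - snd a = t * sin b" using p by simp
    hence e: "sgn_t q * (snd p - snd a) = (sgn_t q * t) * sin b" by (simp only: mult.assoc)
    have "0 < sgn_t q * (snd p - snd a)" unfolding e by (rule mult_pos_pos[OF t sp])
    ultimately show "F 1 b p = F 1 b a \<and> 0 < sgn_t q * (snd p - snd a)" by simp
  next
    assume h: "F 1 b p = F 1 b a \<and> 0 < sgn_t q * (snd p - snd a)"
    define t where "t = (snd p - snd a) / sin b"
    have "fst p = fst a + t * cos b" using h sp unfolding t_def F_def cot_def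
      by (simp add: field_simps)
    hence "p = (fst a + t * cos b, snd a + t * sin b)"
      using sp unfolding t_def by (cases p) simp
    moreover have "sgn_t q * t > 0" using h sp unfolding t_def
      by (metis divide_pos_pos times_divide_eq_right)
    ultimately show "p \<in> sray b q a" unfolding sray_def by blast
  qed
qed



definition OvF :: "(pt \<Rightarrow> real) \<Rightarrow> pt set \<Rightarrow> pt \<Rightarrow> pt \<Rightarrow> pt \<Rightarrow> pt \<Rightarrow> bool" where
  "OvF S P p1 p2 p3 p4 \<longleftrightarrow> p1 \<in> P \<and> p2 \<in> P \<and> p3 \<in> P \<and> p4 \<in> P \<and>
     snd p1 < snd p2 \<and> snd p4 < snd p3 \<and> snd p1 < snd p3 \<and>
     (\<forall>p\<in>P. snd p1 < snd p \<longrightarrow> S p \<le> S p2) \<and>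
     (\<forall>p\<in>P. snd p < snd p3 \<longrightarrow> S p4 \<le> S p) \<and> S p2 < S p4"

definition mk :: "real \<Rightarrow> real \<Rightarrow> real \<Rightarrow> pt" where
  "mk b s y = (s + y * cot b, y)"

lemma F_mk[simp]: "F 1 b (mk b s y) = s" "snd (mk b s y) = y"
  unfolding mk_def F_def by simp_all

lemma ov_gen:
  assumes b: "0 < b" "b < pi" and q: "q = TR \<or> q = TL"
  shows "(\<exists>a c. maxquad P b q a p1 p2 \<and> maxquad P b (opp q) c p3 p4
             \<and> quad b q a \<inter> quad b (opp q) c \<noteq> {})
         \<longleftrightarrow> OvF (\<lambda>p. sgn_s q * F 1 b p) P p1 p2 p3 p4"
proof -
  define \<sigma> where "\<sigma> = sgn_s q"
  have st: "sgn_t q = 1" "sgn_s (opp q) = - \<sigma>" "sgn_t (opp q) = -1" "\<sigma> * \<sigma> = 1"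
    using q unfolding \<sigma>_def by auto
  have Q: "\<And>p a. p \<in> quad b q a \<longleftrightarrow> \<sigma> * F 1 b a < \<sigma> * F 1 b p \<and> snd a < snd p"
    using quad_iff[OF b] st unfolding \<sigma>_def by (simp add: algebra_simps)
  have Q': "\<And>p a. p \<in> quad b (opp q) a \<longleftrightarrow> \<sigma> * F 1 b p < \<sigma> * F 1 b a \<and> snd p < snd a"
    using quad_iff[OF b] st by (simp add: algebra_simps)
  have H: "\<And>p a. p \<in> hray q a \<longleftrightarrow> snd p = snd a \<and> \<sigma> * F 1 b a < \<sigma> * F 1 b p"
    using hray_iff[of _ q _ b] unfolding \<sigma>_def by (simp add: algebra_simps)
  have H': "\<And>p a. p \<in> hray (opp q) a \<longleftrightarrow> snd p = snd a \<and> \<sigma> * F 1 b p < \<sigma> * F 1 b a"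
    using hray_iff[of _ "opp q" _ b] st by (simp add: algebra_simps)
  have R: "\<And>p a. p \<in> sray b q a \<longleftrightarrow> F 1 b p = F 1 b a \<and> snd a < snd p"
    using sray_iff[OF b] st by simp
  have R': "\<And>p a. p \<in> sray b (opp q) a \<longleftrightarrow> F 1 b p = F 1 b a \<and> snd p < snd a"
    using sray_iff[OF b] st by simp
  show ?thesis
  proof
    assume "\<exists>a c. maxquad P b q a p1 p2 \<and> maxquad P b (opp q) c p3 p4
             \<and> quad b q a \<inter> quad b (opp q) c \<noteq> {}"
    then obtain a c m where m1: "maxquad P b q a p1 p2" and m2: "maxquad P b (opp q) c p3 p4"
      and mm: "m \<in> quad b q a" "m \<in> quad b (opp q) c" by blast
    have f1: "\<forall>p\<in>P. \<not> (\<sigma> * F 1 b a < \<sigma> * F 1 b p \<and> snd a < snd p)"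
      using m1 Q unfolding maxquad_def pfree_def by blast
    have f2: "\<forall>p\<in>P. \<not> (\<sigma> * F 1 b p < \<sigma> * F 1 b c \<and> snd p < snd c)"
      using m2 Q' unfolding maxquad_def pfree_def by blast
    have m1': "p1 \<in> P" "p2 \<in> P" "p1 \<in> hray q a" "p2 \<in> sray b q a"
      using m1 unfolding maxquad_def by auto
    have m2': "p3 \<in> P" "p4 \<in> P" "p3 \<in> hray (opp q) c" "p4 \<in> sray b (opp q) c"
      using m2 unfolding maxquad_def by auto
    have h: "p1 \<in> P" "p2 \<in> P" "p3 \<in> P" "p4 \<in> P" "snd p1 = snd a" "F 1 b p2 = F 1 b a"
      "snd a < snd p2" "snd p3 = snd c" "F 1 b p4 = F 1 b c" "snd p4 < snd c"
      using m1'(1,2) m2'(1,2) m1'(3)[unfolded H] m1'(4)[unfolded R] m2'(3)[unfolded H']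
        m2'(4)[unfolded R'] by auto
    have "\<sigma> * F 1 b a < \<sigma> * F 1 b c" "snd a < snd c" using mm unfolding Q Q' by linarith+
    moreover have "\<forall>p\<in>P. snd p1 < snd p \<longrightarrow> \<sigma> * F 1 b p \<le> \<sigma> * F 1 b p2"
      using f1 h(5,6) by (auto simp: not_less)
    moreover have "\<forall>p\<in>P. snd p < snd p3 \<longrightarrow> \<sigma> * F 1 b p4 \<le> \<sigma> * F 1 b p"
      using f2 h(8,9) by (auto simp: not_less)
    ultimately show "OvF (\<lambda>p. sgn_s q * F 1 b p) P p1 p2 p3 p4"
      unfolding OvF_def \<sigma>_def[symmetric] using h(1-4,5,6,7,8,9,10) by simp
  next
    assume ov: "OvF (\<lambda>p. sgn_s q * F 1 b p) P p1 p2 p3 p4"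
    define a where "a = mk b (F 1 b p2) (snd p1)"
    define c where "c = mk b (F 1 b p4) (snd p3)"
    define m where "m = mk b ((F 1 b p2 + F 1 b p4)/2) ((snd p1 + snd p3)/2)"
    have o: "p1 \<in> P" "p2 \<in> P" "p3 \<in> P" "p4 \<in> P" "snd p1 < snd p2" "snd p4 < snd p3"
      "snd p1 < snd p3" "\<forall>p\<in>P. snd p1 < snd p \<longrightarrow> \<sigma> * F 1 b p \<le> \<sigma> * F 1 b p2"
      "\<forall>p\<in>P. snd p < snd p3 \<longrightarrow> \<sigma> * F 1 b p4 \<le> \<sigma> * F 1 b p"
      "\<sigma> * F 1 b p2 < \<sigma> * F 1 b p4"
      using ov unfolding OvF_def \<sigma>_def by auto
    have e1: "\<sigma> * F 1 b p4 \<le> \<sigma> * F 1 b p1" using o by auto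
    have e3: "\<sigma> * F 1 b p3 \<le> \<sigma> * F 1 b p2" using o by auto
    have Fa: "F 1 b a = F 1 b p2" "snd a = snd p1" by (simp_all add: a_def)
    have Fc: "F 1 b c = F 1 b p4" "snd c = snd p3" by (simp_all add: c_def)
    have "pfree P b q a" unfolding pfree_def
    proof (intro equals0I)
      fix x assume "x \<in> quad b q a \<inter> P"
      hence "\<sigma> * F 1 b a < \<sigma> * F 1 b x \<and> snd a < snd x" "x \<in> P" using Q by blast+
      thus False using o(8) Fa by force
    qed
    moreover have "p1 \<in> hray q a" unfolding H Fa using o e1 by linarith
    moreover have "p2 \<in> sray b q a" unfolding R using Fa o by simp
    ultimately have mq1: "maxquad P b q a p1 p2" unfolding maxquad_def using o by blast
    have "pfree P b (opp q) c" unfolding pfree_def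
    proof (intro equals0I)
      fix x assume "x \<in> quad b (opp q) c \<inter> P"
      hence "\<sigma> * F 1 b x < \<sigma> * F 1 b c \<and> snd x < snd c" "x \<in> P" using Q' by blast+
      thus False using o(9) Fc by force
    qed
    moreover have "p3 \<in> hray (opp q) c" unfolding H' Fc using o e3 by linarith
    moreover have "p4 \<in> sray b (opp q) c" unfolding R' using Fc o by simp
    ultimately have mq2: "maxquad P b (opp q) c p3 p4" unfolding maxquad_def using o by blast
    have mi: "m \<in> quad b q a \<inter> quad b (opp q) c"
    proof -
      have Fm: "\<sigma> * F 1 b m = (\<sigma> * F 1 b p2 + \<sigma> * F 1 b p4)/2"
        by (simp add: m_def algebra_simps add_divide_distrib)
      have ym: "snd m = (snd p1 + snd p3)/2" by (simp add: m_def)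
      show ?thesis unfolding Int_iff Q Q' Fa Fc Fm ym using o(7,10) by (simp add: field_simps)
    qed
    show "\<exists>a c. maxquad P b q a p1 p2 \<and> maxquad P b (opp q) c p3 p4
             \<and> quad b q a \<inter> quad b (opp q) c \<noteq> {}" using mq1 mq2 mi by blast
  qed
qed

lemma overlaps_iff:
  assumes b: "0 < b" "b < pi"
  shows "(q, p1, p2, p3, p4) \<in> overlaps P b \<longleftrightarrow>
     (q = TR \<and> OvF (F 1 b) P p1 p2 p3 p4) \<or> (q = TL \<and> OvF (\<lambda>p. - F 1 b p) P p1 p2 p3 p4)"
proof -
  have "(q, p1, p2, p3, p4) \<in> overlaps P b \<longleftrightarrow> (q = TR \<or> q = TL) \<and>
     (\<exists>a c. maxquad P b q a p1 p2 \<and> maxquad P b (opp q) c p3 p4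
             \<and> quad b q a \<inter> quad b (opp q) c \<noteq> {})"
    unfolding overlaps_def by blast
  also have "\<dots> \<longleftrightarrow> (q = TR \<or> q = TL) \<and> OvF (\<lambda>p. sgn_s q * F 1 b p) P p1 p2 p3 p4"
    using ov_gen[OF b] by blast
  also have "\<dots> \<longleftrightarrow> (q = TR \<and> OvF (F 1 b) P p1 p2 p3 p4) \<or> (q = TL \<and> OvF (\<lambda>p. - F 1 b p) P p1 p2 p3 p4)"
    by auto
  finally show ?thesis .
qed



definition sw :: "(real \<Rightarrow> bool) \<Rightarrow> real \<Rightarrow> bool" where
  "sw M t \<longleftrightarrow> (eventually (\<lambda>s. \<not> M s) (at_left t) \<and> eventually M (at_right t)) \<or>
               (eventually M (at_left t) \<and> eventually (\<lambda>s. \<not> M s) (at_right t))"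

lemma F_tendsto_side:
  assumes "0 < t" "t < pi" "G = at_left t \<or> G = at_right t"
  shows "((\<lambda>s. F \<sigma> s p) \<longlongrightarrow> F \<sigma> t p) G"
proof -
  have l: "((\<lambda>s. F \<sigma> s p) \<longlongrightarrow> F \<sigma> t p) (at t)" by (rule F_tendsto[OF assms(1,2)])
  have "at_left t \<le> at t" "at_right t \<le> at t" by (simp_all add: at_le)
  thus ?thesis using assms(3) tendsto_mono[OF _ l] by auto
qed

lemma ev_left_pos: "0 < (t::real) \<Longrightarrow> eventually (\<lambda>s. 0 < s \<and> s < t) (at_left t)"
  using eventually_at_left_real[of 0 t] by auto

lemma ev_right_pi: "(t::real) < pi \<Longrightarrow> eventually (\<lambda>s. t < s \<and> s < pi) (at_right t)"
  using eventually_at_right_real[of t pi] by auto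

locale core =
  fixes \<sigma> :: real and P :: "pt set"
  assumes sig: "\<sigma> = 1 \<or> \<sigma> = -1" and fin: "finite P" and gp: "general_pos P"
begin

abbreviation "Ov t \<equiv> OvF (F \<sigma> t) P"

definition Cl :: "real \<Rightarrow> pt \<Rightarrow> pt \<Rightarrow> pt \<Rightarrow> pt \<Rightarrow> bool" where
  "Cl t p1 p2 p3 p4 \<longleftrightarrow> p1 \<in> P \<and> p2 \<in> P \<and> p3 \<in> P \<and> p4 \<in> P \<and>
     snd p1 < snd p2 \<and> snd p4 < snd p3 \<and> snd p1 < snd p3 \<and>
     (\<forall>p\<in>P. \<not> (snd p1 < snd p \<and> snd p < snd p3)) \<and>
     (\<forall>p\<in>P. snd p1 < snd p \<longrightarrow> F \<sigma> t p \<le> F \<sigma> t p2) \<and>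
     (\<forall>p\<in>P. snd p < snd p3 \<longrightarrow> F \<sigma> t p4 \<le> F \<sigma> t p) \<and> F \<sigma> t p2 \<le> F \<sigma> t p4"

lemma ydist: "p \<in> P \<Longrightarrow> q \<in> P \<Longrightarrow> snd p = snd q \<Longrightarrow> p = q"
  using gp unfolding general_pos_def by blast

lemma no3:
  assumes "p \<in> P" "q \<in> P" "r \<in> P" "p \<noteq> q" "p \<noteq> r" "q \<noteq> r"
    "F \<sigma> t p = F \<sigma> t q" "F \<sigma> t p = F \<sigma> t r"
  shows False
  using F_collinear[OF sig assms(7,8)] gp assms(1-6) unfolding general_pos_def by blast

lemma Ov_Cl:
  assumes "Ov t p1 p2 p3 p4" shows "Cl t p1 p2 p3 p4"
proof -
  have o: "p1 \<in> P" "p2 \<in> P" "p3 \<in> P" "p4 \<in> P"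
     "snd p1 < snd p2" "snd p4 < snd p3" "snd p1 < snd p3"
     "\<forall>p\<in>P. snd p1 < snd p \<longrightarrow> F \<sigma> t p \<le> F \<sigma> t p2"
     "\<forall>p\<in>P. snd p < snd p3 \<longrightarrow> F \<sigma> t p4 \<le> F \<sigma> t p" "F \<sigma> t p2 < F \<sigma> t p4"
    using assms unfolding OvF_def by auto
  have gap: "\<forall>p\<in>P. \<not> (snd p1 < snd p \<and> snd p < snd p3)"
  proof (intro ballI notI)
    fix p assume p: "p \<in> P" "snd p1 < snd p \<and> snd p < snd p3"
    have "F \<sigma> t p \<le> F \<sigma> t p2" using o(8) p by blast
    moreover have "F \<sigma> t p4 \<le> F \<sigma> t p" using o(9) p by blast
    ultimately show False using o(10) by linarith
  qed
  show ?thesis unfolding Cl_def using o gap less_imp_le by blast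
qed

lemma Cl_y:
  assumes "Cl t p1 p2 p3 p4" shows "snd p3 \<le> snd p2 \<and> snd p4 \<le> snd p1"
proof -
  have g: "\<forall>p\<in>P. \<not> (snd p1 < snd p \<and> snd p < snd p3)" "p2 \<in> P" "p4 \<in> P"
    "snd p1 < snd p2" "snd p4 < snd p3" using assms unfolding Cl_def by auto
  have "\<not> (snd p1 < snd p2 \<and> snd p2 < snd p3)" "\<not> (snd p1 < snd p4 \<and> snd p4 < snd p3)"
    using g(1-3) by auto
  thus ?thesis using g(4,5) by linarith
qed

lemma closure:
  assumes t: "0 < t" "t < pi" and G: "G = at_left t \<or> G = at_right t"
    and ev: "eventually (\<lambda>s. Ov s p1 p2 p3 p4) G"
  shows "Cl t p1 p2 p3 p4"
proof -
  have nb: "G \<noteq> bot" using G by (metis trivial_limit_at_left_real trivial_limit_at_right_real)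
  have lim: "\<And>p. ((\<lambda>s. F \<sigma> s p) \<longlongrightarrow> F \<sigma> t p) G" using F_tendsto_side[OF t G] .
  have le: "F \<sigma> t p \<le> F \<sigma> t q" if "eventually (\<lambda>s. F \<sigma> s p \<le> F \<sigma> s q) G" for p q
    using tendsto_le[OF _ lim lim that] nb by simp
  obtain s0 where "Ov s0 p1 p2 p3 p4" using eventually_happens[OF ev] nb by blast
  hence st: "Cl s0 p1 p2 p3 p4" by (rule Ov_Cl)
  have "\<forall>p\<in>P. snd p1 < snd p \<longrightarrow> F \<sigma> t p \<le> F \<sigma> t p2"
  proof (intro ballI impI)
    fix p assume "p \<in> P" "snd p1 < snd p"
    thus "F \<sigma> t p \<le> F \<sigma> t p2" by (intro le eventually_mono[OF ev]) (auto simp: OvF_def)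
  qed
  moreover have "\<forall>p\<in>P. snd p < snd p3 \<longrightarrow> F \<sigma> t p4 \<le> F \<sigma> t p"
  proof (intro ballI impI)
    fix p assume "p \<in> P" "snd p < snd p3"
    thus "F \<sigma> t p4 \<le> F \<sigma> t p" by (intro le eventually_mono[OF ev]) (auto simp: OvF_def)
  qed
  moreover have "F \<sigma> t p2 \<le> F \<sigma> t p4"
    by (intro le eventually_mono[OF ev]) (auto simp: OvF_def)
  ultimately show ?thesis using st unfolding Cl_def by blast
qed

definition Ties :: "real set" where
  "Ties = {t. 0 < t \<and> t < pi \<and> (\<exists>p\<in>P. \<exists>q\<in>P. p \<noteq> q \<and> F \<sigma> t p = F \<sigma> t q)}"

lemma tie_unique:
  assumes "p \<in> P" "q \<in> P" "p \<noteq> q" "0 < t1" "t1 < pi" "0 < t2" "t2 < pi"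
    "F \<sigma> t1 p = F \<sigma> t1 q" "F \<sigma> t2 p = F \<sigma> t2 q"
  shows "t1 = t2"
proof (rule ccontr)
  assume ne: "t1 \<noteq> t2"
  have "snd p \<noteq> snd q" using ydist assms(1-3) by blast
  hence "snd p > snd q \<or> snd q > snd p" by linarith
  moreover have "t1 < t2 \<or> t2 < t1" using ne by linarith
  ultimately show False
  proof (elim disjE)
    assume "snd q < snd p" "t1 < t2"
    hence "F \<sigma> t1 p - F \<sigma> t1 q < F \<sigma> t2 p - F \<sigma> t2 q" using assms by (intro F_mono) auto
    thus False using assms by simp
  next
    assume "snd q < snd p" "t2 < t1"
    hence "F \<sigma> t2 p - F \<sigma> t2 q < F \<sigma> t1 p - F \<sigma> t1 q" using assms by (intro F_mono) auto
    thus False using assms by simp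
  next
    assume "snd p < snd q" "t1 < t2"
    hence "F \<sigma> t1 q - F \<sigma> t1 p < F \<sigma> t2 q - F \<sigma> t2 p" using assms by (intro F_mono) auto
    thus False using assms by simp
  next
    assume "snd p < snd q" "t2 < t1"
    hence "F \<sigma> t2 q - F \<sigma> t2 p < F \<sigma> t1 q - F \<sigma> t1 p" using assms by (intro F_mono) auto
    thus False using assms by simp
  qed
qed

lemma Ties_finite: "finite Ties"
proof -
  have "Ties \<subseteq> (\<Union>pq\<in>P \<times> P. {t. 0 < t \<and> t < pi \<and> fst pq \<noteq> snd pq \<and> F \<sigma> t (fst pq) = F \<sigma> t (snd pq)})"
    unfolding Ties_def by force
  moreover have "finite {t. 0 < t \<and> t < pi \<and> fst pq \<noteq> snd pq \<and> F \<sigma> t (fst pq) = F \<sigma> t (snd pq)}"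
    if "pq \<in> P \<times> P" for pq
  proof (cases "{t. 0 < t \<and> t < pi \<and> fst pq \<noteq> snd pq \<and> F \<sigma> t (fst pq) = F \<sigma> t (snd pq)} = {}")
    case False
    then obtain t0 where t0: "t0 \<in> {t. 0 < t \<and> t < pi \<and> fst pq \<noteq> snd pq \<and> F \<sigma> t (fst pq) = F \<sigma> t (snd pq)}"
      by blast
    have "{t. 0 < t \<and> t < pi \<and> fst pq \<noteq> snd pq \<and> F \<sigma> t (fst pq) = F \<sigma> t (snd pq)} \<subseteq> {t0}"
    proof
      fix x assume "x \<in> {t. 0 < t \<and> t < pi \<and> fst pq \<noteq> snd pq \<and> F \<sigma> t (fst pq) = F \<sigma> t (snd pq)}"
      thus "x \<in> {t0}" using t0 tie_unique[of "fst pq" "snd pq" x t0] that by (auto simp: mem_Times_iff)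
    qed
    thus ?thesis using finite_subset by blast
  next
    case True thus ?thesis by (metis finite.emptyI)
  qed
  ultimately show ?thesis using fin by (meson finite_SigmaI finite_UN_I finite_subset)
qed

lemma generic_exists:
  assumes "a < b"
  shows "\<exists>t. a < t \<and> t < b \<and> t \<notin> Ties"
proof -
  have "infinite ({a<..<b} - Ties)" using assms Ties_finite by (simp add: infinite_Ioo)
  then obtain t where "t \<in> {a<..<b} - Ties" using infinite_imp_nonempty by blast
  thus ?thesis by auto
qed

lemma ClD:
  assumes "Cl t p1 p2 p3 p4"
  shows "p1 \<in> P" "p2 \<in> P" "p3 \<in> P" "p4 \<in> P"
     "snd p1 < snd p2" "snd p4 < snd p3" "snd p1 < snd p3"
     "\<And>p. p \<in> P \<Longrightarrow> \<not> (snd p1 < snd p \<and> snd p < snd p3)"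
     "\<And>p. p \<in> P \<Longrightarrow> snd p1 < snd p \<Longrightarrow> F \<sigma> t p \<le> F \<sigma> t p2"
     "\<And>p. p \<in> P \<Longrightarrow> snd p < snd p3 \<Longrightarrow> F \<sigma> t p4 \<le> F \<sigma> t p"
     "F \<sigma> t p2 \<le> F \<sigma> t p4"
  using assms unfolding Cl_def by auto

lemma gen_eq:
  assumes t: "0 < t" "t < pi" "t \<notin> Ties"
    and o1: "Ov t p1 p2 p3 p4" and o2: "Ov t q1 q2 p3 q4"
  shows "p1 = q1 \<and> p2 = q2 \<and> p4 = q4"
proof -
  have c1: "Cl t p1 p2 p3 p4" and c2: "Cl t q1 q2 p3 q4" using o1 o2 Ov_Cl by auto
  have nt: "\<And>p q. p \<in> P \<Longrightarrow> q \<in> P \<Longrightarrow> F \<sigma> t p = F \<sigma> t q \<Longrightarrow> p = q"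
    using t unfolding Ties_def by blast
  have "snd p1 = snd q1"
  proof (rule ccontr)
    assume "snd p1 \<noteq> snd q1"
    hence "snd p1 < snd q1 \<or> snd q1 < snd p1" by linarith
    thus False using ClD(8)[OF c1, of q1] ClD(8)[OF c2, of p1] ClD(1,7)[OF c1] ClD(1,7)[OF c2] by auto
  qed
  hence e1: "p1 = q1" using ydist ClD(1)[OF c1] ClD(1)[OF c2] by blast
  have "F \<sigma> t q2 \<le> F \<sigma> t p2" using ClD(9)[OF c1 ClD(2)[OF c2]] ClD(5)[OF c2] e1 by simp
  moreover have "F \<sigma> t p2 \<le> F \<sigma> t q2" using ClD(9)[OF c2 ClD(2)[OF c1]] ClD(5)[OF c1] e1 by simp
  ultimately have "F \<sigma> t p2 = F \<sigma> t q2" by linarith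
  hence e2: "p2 = q2" using nt ClD(2)[OF c1] ClD(2)[OF c2] by blast
  have "F \<sigma> t q4 \<le> F \<sigma> t p4" using ClD(10)[OF c2 ClD(4)[OF c1]] ClD(6)[OF c1] by simp
  moreover have "F \<sigma> t p4 \<le> F \<sigma> t q4" using ClD(10)[OF c1 ClD(4)[OF c2]] ClD(6)[OF c2] by simp
  ultimately have "F \<sigma> t p4 = F \<sigma> t q4" by linarith
  hence e4: "p4 = q4" using nt ClD(4)[OF c1] ClD(4)[OF c2] by blast
  show ?thesis using e1 e2 e4 by blast
qed

end


context core begin

lemma ev_less:
  assumes t: "0 < t" "t < pi" and G: "G = at_left t \<or> G = at_right t"
    and lt: "F \<sigma> t p < F \<sigma> t q"
  shows "eventually (\<lambda>s. F \<sigma> s p < F \<sigma> s q) G"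
proof -
  have "((\<lambda>s. F \<sigma> s q - F \<sigma> s p) \<longlongrightarrow> F \<sigma> t q - F \<sigma> t p) G"
    by (intro tendsto_diff F_tendsto_side[OF t G])
  from order_tendstoD(1)[OF this, of 0] lt show ?thesis
    by (auto elim: eventually_mono)
qed

lemma Ov_intro:
  assumes "Cl t0 p1 p2 p3 p4"
    "\<forall>p\<in>P. snd p1 < snd p \<longrightarrow> F \<sigma> s p \<le> F \<sigma> s p2"
    "\<forall>p\<in>P. snd p < snd p3 \<longrightarrow> F \<sigma> s p4 \<le> F \<sigma> s p" "F \<sigma> s p2 < F \<sigma> s p4"
  shows "Ov s p1 p2 p3 p4"
  using assms ClD[OF assms(1)] unfolding OvF_def by blast

lemma rel_class:
  assumes t: "0 < t" "t < pi"
    and L: "eventually (\<lambda>s. Ov s p1 p2 p3 p4) (at_left t)"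
    and nR: "\<not> eventually (\<lambda>s. Ov s p1 p2 p3 p4) (at_right t)"
  shows "F \<sigma> t p2 = F \<sigma> t p4 \<or> (\<exists>u\<in>P. snd p2 < snd u \<and> F \<sigma> t u = F \<sigma> t p2)
         \<or> (\<exists>w\<in>P. snd w < snd p4 \<and> F \<sigma> t w = F \<sigma> t p4)"
proof (rule ccontr)
  assume "\<not> ?thesis"
  hence n3: "F \<sigma> t p2 \<noteq> F \<sigma> t p4"
    and n1: "\<And>u. u \<in> P \<Longrightarrow> snd p2 < snd u \<Longrightarrow> F \<sigma> t u \<noteq> F \<sigma> t p2"
    and n2: "\<And>w. w \<in> P \<Longrightarrow> snd w < snd p4 \<Longrightarrow> F \<sigma> t w \<noteq> F \<sigma> t p4" by auto
  have c: "Cl t p1 p2 p3 p4" using closure[OF t _ L] by simp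
  have G: "at_right t = at_left t \<or> at_right t = at_right t" by simp
  have evpi: "eventually (\<lambda>s. t < s \<and> s < pi) (at_right t)" using ev_right_pi t by blast
  have E3: "eventually (\<lambda>s. F \<sigma> s p2 < F \<sigma> s p4) (at_right t)"
    using ev_less[OF t G] ClD(11)[OF c] n3 by simp
  have E1: "\<forall>p\<in>P. eventually (\<lambda>s. snd p1 < snd p \<longrightarrow> F \<sigma> s p \<le> F \<sigma> s p2) (at_right t)"
  proof
    fix p assume p: "p \<in> P"
    show "eventually (\<lambda>s. snd p1 < snd p \<longrightarrow> F \<sigma> s p \<le> F \<sigma> s p2) (at_right t)"
    proof (cases "snd p1 < snd p")
      case True
      have le: "F \<sigma> t p \<le> F \<sigma> t p2" using ClD(9)[OF c p True] .
      show ?thesis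
      proof (cases "F \<sigma> t p < F \<sigma> t p2")
        case True
        thus ?thesis using ev_less[OF t G True] by (auto elim: eventually_mono)
      next
        case False
        hence eq: "F \<sigma> t p = F \<sigma> t p2" using le by simp
        show ?thesis
        proof (cases "p = p2")
          case True thus ?thesis by simp
        next
          case False
          hence "snd p \<noteq> snd p2" using ydist p ClD(2)[OF c] by blast
          moreover have "\<not> snd p2 < snd p" using n1 p eq by blast
          ultimately have yl: "snd p < snd p2" by linarith
          show ?thesis
          proof (rule eventually_mono[OF evpi], intro impI)
            fix s assume s: "t < s \<and> s < pi"
            have "F \<sigma> t p2 - F \<sigma> t p < F \<sigma> s p2 - F \<sigma> s p"
              using F_mono[OF yl] s t by blast
            thus "F \<sigma> s p \<le> F \<sigma> s p2" using eq by simp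
          qed
        qed
      qed
    qed simp
  qed
  have E2: "\<forall>p\<in>P. eventually (\<lambda>s. snd p < snd p3 \<longrightarrow> F \<sigma> s p4 \<le> F \<sigma> s p) (at_right t)"
  proof
    fix p assume p: "p \<in> P"
    show "eventually (\<lambda>s. snd p < snd p3 \<longrightarrow> F \<sigma> s p4 \<le> F \<sigma> s p) (at_right t)"
    proof (cases "snd p < snd p3")
      case True
      have le: "F \<sigma> t p4 \<le> F \<sigma> t p" using ClD(10)[OF c p True] .
      show ?thesis
      proof (cases "F \<sigma> t p4 < F \<sigma> t p")
        case True
        thus ?thesis using ev_less[OF t G True] by (auto elim: eventually_mono)
      next
        case False
        hence eq: "F \<sigma> t p = F \<sigma> t p4" using le by simp
        show ?thesis
        proof (cases "p = p4")
          case True thus ?thesis by simp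
        next
          case False
          hence "snd p \<noteq> snd p4" using ydist p ClD(4)[OF c] by blast
          moreover have "\<not> snd p < snd p4" using n2 p eq by blast
          ultimately have yl: "snd p4 < snd p" by linarith
          show ?thesis
          proof (rule eventually_mono[OF evpi], intro impI)
            fix s assume s: "t < s \<and> s < pi"
            have "F \<sigma> t p - F \<sigma> t p4 < F \<sigma> s p - F \<sigma> s p4"
              using F_mono[OF yl] s t by blast
            thus "F \<sigma> s p4 \<le> F \<sigma> s p" using eq by simp
          qed
        qed
      qed
    qed simp
  qed
  have "eventually (\<lambda>s. Ov s p1 p2 p3 p4) (at_right t)"
    using eventually_conj[OF eventually_conj[OF eventually_ball_finite[OF fin E1]
      eventually_ball_finite[OF fin E2]] E3]
    by (rule eventually_mono) (use Ov_intro[OF c] in blast)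
  thus False using nR by contradiction
qed

lemma cre_class:
  assumes t: "0 < t" "t < pi"
    and R: "eventually (\<lambda>s. Ov s p1 p2 p3 p4) (at_right t)"
    and nL: "\<not> eventually (\<lambda>s. Ov s p1 p2 p3 p4) (at_left t)"
  shows "(\<exists>v\<in>P. snd p1 < snd v \<and> snd v < snd p2 \<and> F \<sigma> t v = F \<sigma> t p2)
         \<or> (\<exists>v\<in>P. snd v < snd p3 \<and> snd p4 < snd v \<and> F \<sigma> t v = F \<sigma> t p4)"
proof (rule ccontr)
  assume "\<not> ?thesis"
  hence n1: "\<And>v. v \<in> P \<Longrightarrow> snd p1 < snd v \<Longrightarrow> snd v < snd p2 \<Longrightarrow> F \<sigma> t v \<noteq> F \<sigma> t p2"
    and n2: "\<And>v. v \<in> P \<Longrightarrow> snd v < snd p3 \<Longrightarrow> snd p4 < snd v \<Longrightarrow> F \<sigma> t v \<noteq> F \<sigma> t p4" by auto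
  have c: "Cl t p1 p2 p3 p4" using closure[OF t _ R] by simp
  have G: "at_left t = at_left t \<or> at_left t = at_right t" by simp
  have evpos: "eventually (\<lambda>s. 0 < s \<and> s < t) (at_left t)" using ev_left_pos t by blast
  have y42: "snd p4 < snd p2" using Cl_y[OF c] ClD(6)[OF c] by linarith
  have lt3: "F \<sigma> t p2 < F \<sigma> t p4"
  proof (rule ccontr)
    assume "\<not> ?thesis"
    hence eq: "F \<sigma> t p2 = F \<sigma> t p4" using ClD(11)[OF c] by simp
    obtain s where s: "Ov s p1 p2 p3 p4" "t < s" "s < pi"
      using eventually_happens[OF eventually_conj[OF R ev_right_pi[OF t(2)]]] by auto
    have "F \<sigma> t p2 - F \<sigma> t p4 < F \<sigma> s p2 - F \<sigma> s p4" using F_mono[OF y42] s t by blast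
    moreover have "F \<sigma> s p2 < F \<sigma> s p4" using s(1) unfolding OvF_def by blast
    ultimately show False using eq by simp
  qed
  have E3: "eventually (\<lambda>s. F \<sigma> s p2 < F \<sigma> s p4) (at_left t)"
    using ev_less[OF t G lt3] .
  have E1: "\<forall>p\<in>P. eventually (\<lambda>s. snd p1 < snd p \<longrightarrow> F \<sigma> s p \<le> F \<sigma> s p2) (at_left t)"
  proof
    fix p assume p: "p \<in> P"
    show "eventually (\<lambda>s. snd p1 < snd p \<longrightarrow> F \<sigma> s p \<le> F \<sigma> s p2) (at_left t)"
    proof (cases "snd p1 < snd p")
      case True
      have le: "F \<sigma> t p \<le> F \<sigma> t p2" using ClD(9)[OF c p True] .
      show ?thesis
      proof (cases "F \<sigma> t p < F \<sigma> t p2")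
        case True
        thus ?thesis using ev_less[OF t G True] by (auto elim: eventually_mono)
      next
        case False
        hence eq: "F \<sigma> t p = F \<sigma> t p2" using le by simp
        show ?thesis
        proof (cases "p = p2")
          case True thus ?thesis by simp
        next
          case False
          hence "snd p \<noteq> snd p2" using ydist p ClD(2)[OF c] by blast
          moreover have "\<not> snd p < snd p2" using n1 p eq True by blast
          ultimately have yl: "snd p2 < snd p" by linarith
          show ?thesis
          proof (rule eventually_mono[OF evpos], intro impI)
            fix s assume s: "0 < s \<and> s < t"
            have "F \<sigma> s p - F \<sigma> s p2 < F \<sigma> t p - F \<sigma> t p2"
              using F_mono[OF yl] s t by blast
            thus "F \<sigma> s p \<le> F \<sigma> s p2" using eq by simp
          qed
        qed
      qed
    qed simp
  qed
  have E2: "\<forall>p\<in>P. eventually (\<lambda>s. snd p < snd p3 \<longrightarrow> F \<sigma> s p4 \<le> F \<sigma> s p) (at_left t)"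
  proof
    fix p assume p: "p \<in> P"
    show "eventually (\<lambda>s. snd p < snd p3 \<longrightarrow> F \<sigma> s p4 \<le> F \<sigma> s p) (at_left t)"
    proof (cases "snd p < snd p3")
      case True
      have le: "F \<sigma> t p4 \<le> F \<sigma> t p" using ClD(10)[OF c p True] .
      show ?thesis
      proof (cases "F \<sigma> t p4 < F \<sigma> t p")
        case True
        thus ?thesis using ev_less[OF t G True] by (auto elim: eventually_mono)
      next
        case False
        hence eq: "F \<sigma> t p = F \<sigma> t p4" using le by simp
        show ?thesis
        proof (cases "p = p4")
          case True thus ?thesis by simp
        next
          case False
          hence "snd p \<noteq> snd p4" using ydist p ClD(4)[OF c] by blast
          moreover have "\<not> snd p4 < snd p" using n2 p eq True by blast
          ultimately have yl: "snd p < snd p4" by linarith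
          show ?thesis
          proof (rule eventually_mono[OF evpos], intro impI)
            fix s assume s: "0 < s \<and> s < t"
            have "F \<sigma> s p4 - F \<sigma> s p < F \<sigma> t p4 - F \<sigma> t p"
              using F_mono[OF yl] s t by blast
            thus "F \<sigma> s p4 \<le> F \<sigma> s p" using eq by simp
          qed
        qed
      qed
    qed simp
  qed
  have "eventually (\<lambda>s. Ov s p1 p2 p3 p4) (at_left t)"
    using eventually_conj[OF eventually_conj[OF eventually_ball_finite[OF fin E1]
      eventually_ball_finite[OF fin E2]] E3]
    by (rule eventually_mono) (use Ov_intro[OF c] in blast)
  thus False using nL by contradiction
qed

end


context core begin

lemma back_time:
  assumes c': "Cl t' q1 q2 q3 q4" and tt: "0 < t" "t < t'" "t' < pi"
    and v: "v \<in> P" "snd q1 < snd v" "F \<sigma> t' v = F \<sigma> t' q2"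
    and u: "u \<in> P" "snd v < snd u" "F \<sigma> t u = F \<sigma> t v"
  shows False
proof -
  have "F \<sigma> t' u \<le> F \<sigma> t' q2" using ClD(9)[OF c' u(1)] v(2) u(2) by simp
  moreover have "F \<sigma> t u - F \<sigma> t v < F \<sigma> t' u - F \<sigma> t' v" using F_mono[OF u(2)] tt by blast
  ultimately show False using v(3) u(3) by simp
qed

lemma front_time:
  assumes c': "Cl t' q1 q2 q3 q4" and tt: "0 < t" "t < t'" "t' < pi"
    and v: "v \<in> P" "snd v < snd q3" "F \<sigma> t' v = F \<sigma> t' q4"
    and w: "w \<in> P" "snd w < snd v" "F \<sigma> t w = F \<sigma> t v"
  shows False
proof -
  have "F \<sigma> t' q4 \<le> F \<sigma> t' w" using ClD(10)[OF c' w(1)] v(2) w(2) by simp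
  moreover have "F \<sigma> t v - F \<sigma> t w < F \<sigma> t' v - F \<sigma> t' w" using F_mono[OF w(2)] tt by blast
  ultimately show False using v(3) w(3) by simp
qed

lemma split_time:
  assumes c: "Cl t p1 p2 p3 p4" and c': "Cl t' q1 q2 p3 q4" and tt: "0 < t" "t < t'" "t' < pi"
    and eq: "F \<sigma> t p2 = F \<sigma> t p4"
  shows False
proof -
  have y2: "snd q1 < snd p2" using Cl_y[OF c] ClD(7)[OF c'] by linarith
  have "F \<sigma> t' p2 \<le> F \<sigma> t' q2" using ClD(9)[OF c' ClD(2)[OF c] y2] .
  moreover have "F \<sigma> t' q4 \<le> F \<sigma> t' p4" using ClD(10)[OF c' ClD(4)[OF c] ClD(6)[OF c]] .
  moreover have "F \<sigma> t' q2 \<le> F \<sigma> t' q4" using ClD(11)[OF c'] .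
  moreover have y42: "snd p4 < snd p2" using Cl_y[OF c] ClD(6)[OF c] by linarith
  hence "F \<sigma> t p2 - F \<sigma> t p4 < F \<sigma> t' p2 - F \<sigma> t' p4" using F_mono tt by blast
  ultimately show False using eq by simp
qed

lemma back_split:
  assumes c: "Cl t p1 p2 p3 p4" and c': "Cl t q1 q2 q3 q4"
    and v: "v \<in> P" "snd p1 < snd v" "snd q1 < snd v" "F \<sigma> t v = F \<sigma> t p2" "F \<sigma> t v = F \<sigma> t q2"
    and u: "u \<in> P" "snd v < snd u" "F \<sigma> t u = F \<sigma> t v"
  shows "p3 = q3"
proof (rule ccontr)
  assume ne: "p3 \<noteq> q3"
  hence "snd p3 \<noteq> snd q3" using ydist ClD(3)[OF c] ClD(3)[OF c'] by blast
  hence "snd p3 < snd q3 \<or> snd q3 < snd p3" by linarith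
  thus False
  proof
    assume lt: "snd p3 < snd q3"
    have "\<not> (snd q1 < snd p3 \<and> snd p3 < snd q3)" using ClD(8)[OF c' ClD(3)[OF c]] .
    hence y: "snd p3 \<le> snd q1" using lt by linarith
    have "F \<sigma> t q4 \<le> F \<sigma> t p3" using ClD(10)[OF c' ClD(3)[OF c] lt] .
    moreover have "F \<sigma> t q2 \<le> F \<sigma> t q4" using ClD(11)[OF c'] .
    moreover have "F \<sigma> t p3 \<le> F \<sigma> t p2" using ClD(9)[OF c ClD(3)[OF c] ClD(7)[OF c]] .
    ultimately have e: "F \<sigma> t v = F \<sigma> t p3" using v by simp
    show False using no3[OF v(1) u(1) ClD(3)[OF c] _ _ _ u(3)[symmetric] e] u(2) v(3) y by force
  next
    assume lt: "snd q3 < snd p3"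
    have "\<not> (snd p1 < snd q3 \<and> snd q3 < snd p3)" using ClD(8)[OF c ClD(3)[OF c']] .
    hence y: "snd q3 \<le> snd p1" using lt by linarith
    have y1: "snd q1 < snd p1" using y ClD(7)[OF c'] by linarith
    have "F \<sigma> t p1 \<le> F \<sigma> t q2" using ClD(9)[OF c' ClD(1)[OF c] y1] .
    moreover have "F \<sigma> t p4 \<le> F \<sigma> t p1" using ClD(10)[OF c ClD(1)[OF c] ClD(7)[OF c]] .
    moreover have "F \<sigma> t p2 \<le> F \<sigma> t p4" using ClD(11)[OF c] .
    ultimately have e: "F \<sigma> t v = F \<sigma> t p1" using v by simp
    show False using no3[OF v(1) u(1) ClD(1)[OF c] _ _ _ u(3)[symmetric] e] u(2) v(2) by force
  qed
qed

lemma front_split: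
  assumes c: "Cl t p1 p2 p3 p4" and c': "Cl t q1 q2 q3 q4"
    and v: "v \<in> P" "snd v < snd p3" "snd v < snd q3" "F \<sigma> t v = F \<sigma> t p4" "F \<sigma> t v = F \<sigma> t q4"
    and w: "w \<in> P" "snd w < snd v" "F \<sigma> t w = F \<sigma> t v"
  shows "p3 = q3"
proof (rule ccontr)
  assume ne: "p3 \<noteq> q3"
  hence "snd p3 \<noteq> snd q3" using ydist ClD(3)[OF c] ClD(3)[OF c'] by blast
  hence "snd p3 < snd q3 \<or> snd q3 < snd p3" by linarith
  thus False
  proof
    assume lt: "snd p3 < snd q3"
    have "F \<sigma> t q4 \<le> F \<sigma> t p3" using ClD(10)[OF c' ClD(3)[OF c] lt] .
    moreover have "F \<sigma> t p3 \<le> F \<sigma> t p2" using ClD(9)[OF c ClD(3)[OF c] ClD(7)[OF c]] .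
    moreover have "F \<sigma> t p2 \<le> F \<sigma> t p4" using ClD(11)[OF c] .
    ultimately have e: "F \<sigma> t v = F \<sigma> t p3" using v by simp
    show False using no3[OF v(1) w(1) ClD(3)[OF c] _ _ _ w(3)[symmetric] e] w(2) v(2) by force
  next
    assume lt: "snd q3 < snd p3"
    have "\<not> (snd p1 < snd q3 \<and> snd q3 < snd p3)" using ClD(8)[OF c ClD(3)[OF c']] .
    hence y: "snd q3 \<le> snd p1" using lt by linarith
    have "F \<sigma> t p4 \<le> F \<sigma> t q3" using ClD(10)[OF c ClD(3)[OF c'] lt] .
    moreover have "F \<sigma> t q3 \<le> F \<sigma> t q2" using ClD(9)[OF c' ClD(3)[OF c'] ClD(7)[OF c']] .
    moreover have "F \<sigma> t q2 \<le> F \<sigma> t q4" using ClD(11)[OF c'] .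
    ultimately have e: "F \<sigma> t v = F \<sigma> t q3" using v by simp
    show False using no3[OF v(1) w(1) ClD(3)[OF c'] _ _ _ w(3)[symmetric] e] w(2) v(3) by force
  qed
qed

lemma same_side:
  assumes t: "0 < t" "t < pi" and G: "G = at_left t \<or> G = at_right t"
    and e1: "eventually (\<lambda>s. Ov s p1 p2 p3 p4) G" and e2: "eventually (\<lambda>s. Ov s q1 q2 p3 q4) G"
  shows "p1 = q1 \<and> p2 = q2 \<and> p4 = q4"
  using G
proof
  assume G: "G = at_left t"
  obtain b where b: "b < t" "\<forall>s>b. s < t \<longrightarrow> Ov s p1 p2 p3 p4 \<and> Ov s q1 q2 p3 q4 \<and> 0 < s"
    using eventually_conj[OF eventually_conj[OF e1 e2] ev_left_pos[OF t(1), folded G]]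
    unfolding G eventually_at_left_field by auto
  obtain s where s: "b < s" "s < t" "s \<notin> Ties" using generic_exists[OF b(1)] by blast
  have o: "Ov s p1 p2 p3 p4" "Ov s q1 q2 p3 q4" "0 < s" using b(2) s by auto
  show ?thesis using gen_eq[OF o(3) _ s(3) o(1,2)] s t by linarith
next
  assume G: "G = at_right t"
  obtain b where b: "t < b" "\<forall>s>t. s < b \<longrightarrow> Ov s p1 p2 p3 p4 \<and> Ov s q1 q2 p3 q4 \<and> s < pi"
    using eventually_conj[OF eventually_conj[OF e1 e2] ev_right_pi[OF t(2), folded G]]
    unfolding G eventually_at_right_field by auto
  obtain s where s: "t < s" "s < b" "s \<notin> Ties" using generic_exists[OF b(1)] by blast
  have o: "Ov s p1 p2 p3 p4" "Ov s q1 q2 p3 q4" "s < pi" using b(2) s by auto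
  show ?thesis using gen_eq[OF _ o(3) s(3) o(1,2)] s t by linarith
qed

end


context core begin

lemma same_p1:
  assumes c: "Cl t p1 p2 p3 p4" and c': "Cl t' p1 q2 q3 q4"
  shows "p3 = q3"
proof -
  have "\<not> snd p3 < snd q3" using ClD(8)[OF c' ClD(3)[OF c]] ClD(7)[OF c] by blast
  moreover have "\<not> snd q3 < snd p3" using ClD(8)[OF c ClD(3)[OF c']] ClD(7)[OF c'] by blast
  ultimately have "snd p3 = snd q3" by linarith
  thus ?thesis using ydist ClD(3)[OF c] ClD(3)[OF c'] by blast
qed

lemma inj_R3:
  assumes t: "0 < t" "t < pi" and t': "0 < t'" "t' < pi"
    and L: "eventually (\<lambda>s. Ov s p1 p2 p3 p4) (at_left t)"
    and L': "eventually (\<lambda>s. Ov s p1 q2 q3 q4) (at_left t')"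
    and e: "F \<sigma> t p2 = F \<sigma> t p4" and e': "F \<sigma> t' q2 = F \<sigma> t' q4"
  shows "t = t' \<and> p2 = q2 \<and> p3 = q3 \<and> p4 = q4"
proof -
  have c: "Cl t p1 p2 p3 p4" using closure[OF t _ L] by simp
  have c': "Cl t' p1 q2 q3 q4" using closure[OF t' _ L'] by simp
  have e3: "p3 = q3" using same_p1[OF c c'] .
  have "\<not> t < t'" using split_time[OF c c'[folded e3]] t t' e by blast
  moreover have "\<not> t' < t" using split_time[OF c'[folded e3] c] t t' e' by blast
  ultimately have tt: "t = t'" by linarith
  show ?thesis using same_side[OF t _ L L'[folded e3 tt]] tt e3 by simp
qed

lemma inj_R1:
  assumes t: "0 < t" "t < pi" and t': "0 < t'" "t' < pi"
    and L: "eventually (\<lambda>s. Ov s p1 v p3 p4) (at_left t)"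
    and L': "eventually (\<lambda>s. Ov s q1 v q3 q4) (at_left t')"
    and u: "u \<in> P" "snd v < snd u" "F \<sigma> t u = F \<sigma> t v"
    and u': "u' \<in> P" "snd v < snd u'" "F \<sigma> t' u' = F \<sigma> t' v"
  shows "t = t' \<and> p1 = q1 \<and> p3 = q3 \<and> p4 = q4"
proof -
  have c: "Cl t p1 v p3 p4" using closure[OF t _ L] by simp
  have c': "Cl t' q1 v q3 q4" using closure[OF t' _ L'] by simp
  have "\<not> t < t'" using back_time[OF c' _ _ _ ClD(2)[OF c] ClD(5)[OF c'] refl u] t t' by blast
  moreover have "\<not> t' < t" using back_time[OF c _ _ _ ClD(2)[OF c] ClD(5)[OF c] refl u'] t t' by blast
  ultimately have tt: "t = t'" by linarith
  have c'': "Cl t q1 v q3 q4" using c' tt by simp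
  have e3: "p3 = q3" using back_split[OF c c'' ClD(2)[OF c] ClD(5)[OF c] ClD(5)[OF c'] refl refl u] .
  show ?thesis using same_side[OF t _ L L'[folded e3 tt]] tt e3 by simp
qed

lemma inj_R2:
  assumes t: "0 < t" "t < pi" and t': "0 < t'" "t' < pi"
    and L: "eventually (\<lambda>s. Ov s p1 p2 p3 v) (at_left t)"
    and L': "eventually (\<lambda>s. Ov s q1 q2 q3 v) (at_left t')"
    and w: "w \<in> P" "snd w < snd v" "F \<sigma> t w = F \<sigma> t v"
    and w': "w' \<in> P" "snd w' < snd v" "F \<sigma> t' w' = F \<sigma> t' v"
  shows "t = t' \<and> p1 = q1 \<and> p2 = q2 \<and> p3 = q3"
proof -
  have c: "Cl t p1 p2 p3 v" using closure[OF t _ L] by simp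
  have c': "Cl t' q1 q2 q3 v" using closure[OF t' _ L'] by simp
  have "\<not> t < t'" using front_time[OF c' _ _ _ ClD(4)[OF c] ClD(6)[OF c'] refl w] t t' by blast
  moreover have "\<not> t' < t" using front_time[OF c _ _ _ ClD(4)[OF c] ClD(6)[OF c] refl w'] t t' by blast
  ultimately have tt: "t = t'" by linarith
  have c'': "Cl t q1 q2 q3 v" using c' tt by simp
  have e3: "p3 = q3" using front_split[OF c c'' ClD(4)[OF c] ClD(6)[OF c] ClD(6)[OF c'] refl refl w] .
  show ?thesis using same_side[OF t _ L L'[folded e3 tt]] tt e3 by simp
qed

lemma inj_C1:
  assumes t: "0 < t" "t < pi" and t': "0 < t'" "t' < pi"
    and R: "eventually (\<lambda>s. Ov s p1 p2 p3 p4) (at_right t)"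
    and R': "eventually (\<lambda>s. Ov s q1 q2 q3 q4) (at_right t')"
    and v: "v \<in> P" "snd p1 < snd v" "snd v < snd p2" "F \<sigma> t v = F \<sigma> t p2"
    and v': "snd q1 < snd v" "snd v < snd q2" "F \<sigma> t' v = F \<sigma> t' q2"
  shows "t = t' \<and> p1 = q1 \<and> p2 = q2 \<and> p3 = q3 \<and> p4 = q4"
proof -
  have c: "Cl t p1 p2 p3 p4" using closure[OF t _ R] by simp
  have c': "Cl t' q1 q2 q3 q4" using closure[OF t' _ R'] by simp
  have "\<not> t < t'" using back_time[OF c' _ _ _ v(1) v'(1,3) ClD(2)[OF c] v(3) v(4)[symmetric]] t t'
    by blast
  moreover have "\<not> t' < t" using back_time[OF c _ _ _ v(1,2,4) ClD(2)[OF c'] v'(2) v'(3)[symmetric]] t t'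
    by blast
  ultimately have tt: "t = t'" by linarith
  have c'': "Cl t q1 q2 q3 q4" using c' tt by simp
  have e3: "p3 = q3"
    using back_split[OF c c'' v(1,2) v'(1) v(4) v'(3)[folded tt] ClD(2)[OF c] v(3) v(4)[symmetric]] .
  show ?thesis using same_side[OF t _ R R'[folded e3 tt]] tt e3 by simp
qed

lemma inj_C2:
  assumes t: "0 < t" "t < pi" and t': "0 < t'" "t' < pi"
    and R: "eventually (\<lambda>s. Ov s p1 p2 p3 p4) (at_right t)"
    and R': "eventually (\<lambda>s. Ov s q1 q2 q3 q4) (at_right t')"
    and v: "v \<in> P" "snd v < snd p3" "snd p4 < snd v" "F \<sigma> t v = F \<sigma> t p4"
    and v': "snd v < snd q3" "snd q4 < snd v" "F \<sigma> t' v = F \<sigma> t' q4"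
  shows "t = t' \<and> p1 = q1 \<and> p2 = q2 \<and> p3 = q3 \<and> p4 = q4"
proof -
  have c: "Cl t p1 p2 p3 p4" using closure[OF t _ R] by simp
  have c': "Cl t' q1 q2 q3 q4" using closure[OF t' _ R'] by simp
  have "\<not> t < t'" using front_time[OF c' _ _ _ v(1) v'(1,3) ClD(4)[OF c] v(3) v(4)[symmetric]] t t'
    by blast
  moreover have "\<not> t' < t" using front_time[OF c _ _ _ v(1,2,4) ClD(4)[OF c'] v'(2) v'(3)[symmetric]] t t'
    by blast
  ultimately have tt: "t = t'" by linarith
  have c'': "Cl t q1 q2 q3 q4" using c' tt by simp
  have e3: "p3 = q3"
    using front_split[OF c c'' v(1,2) v'(1) v(4) v'(3)[folded tt] ClD(4)[OF c] v(3) v(4)[symmetric]] .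
  show ?thesis using same_side[OF t _ R R'[folded e3 tt]] tt e3 by simp
qed

end


context core begin

definition Ev :: "(real \<times> pt \<times> pt \<times> pt \<times> pt) set" where
  "Ev = {(t, p1, p2, p3, p4) | t p1 p2 p3 p4. 0 < t \<and> t < pi \<and> sw (\<lambda>s. Ov s p1 p2 p3 p4) t}"

definition C1 where "C1 t p1 p2 v \<longleftrightarrow> v \<in> P \<and> snd p1 < snd v \<and> snd v < snd p2 \<and> F \<sigma> t v = F \<sigma> t p2"
definition C2 where "C2 t p3 p4 v \<longleftrightarrow> v \<in> P \<and> snd v < snd p3 \<and> snd p4 < snd v \<and> F \<sigma> t v = F \<sigma> t p4"

fun key :: "real \<times> pt \<times> pt \<times> pt \<times> pt \<Rightarrow> nat \<times> pt" where
  "key (t, p1, p2, p3, p4) =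
   (if eventually (\<lambda>s. Ov s p1 p2 p3 p4) (at_left t) then
     (if F \<sigma> t p2 = F \<sigma> t p4 then (0, p1)
      else if (\<exists>u\<in>P. snd p2 < snd u \<and> F \<sigma> t u = F \<sigma> t p2) then (1, p2) else (2, p4))
    else if (\<exists>v. C1 t p1 p2 v) then (3, SOME v. C1 t p1 p2 v)
    else (4, SOME v. C2 t p3 p4 v))"

lemma ev_rel:
  assumes "sw M t" "eventually M (at_left t)"
  shows "\<not> eventually M (at_right t)"
proof
  assume R: "eventually M (at_right t)"
  from assms(1) show False unfolding sw_def
  proof
    assume h: "eventually (\<lambda>s. \<not> M s) (at_left t) \<and> eventually M (at_right t)"
    have "eventually (\<lambda>s. M s \<and> \<not> M s) (at_left t)" using eventually_conj[OF assms(2) conjunct1[OF h]] .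
    hence "eventually (\<lambda>s. False) (at_left t)" by (rule eventually_mono) simp
    thus False by simp
  next
    assume h: "eventually M (at_left t) \<and> eventually (\<lambda>s. \<not> M s) (at_right t)"
    have "eventually (\<lambda>s. M s \<and> \<not> M s) (at_right t)" using eventually_conj[OF R conjunct2[OF h]] .
    hence "eventually (\<lambda>s. False) (at_right t)" by (rule eventually_mono) simp
    thus False by simp
  qed
qed

lemma ev_cre:
  assumes "sw M t" "\<not> eventually M (at_left t)"
  shows "eventually M (at_right t)"
  using assms unfolding sw_def by blast

lemma key_range:
  assumes "e \<in> Ev" shows "key e \<in> {0..4} \<times> P"
proof -
  obtain t p1 p2 p3 p4 where e: "e = (t, p1, p2, p3, p4)" and t: "0 < t" "t < pi"
    and s: "sw (\<lambda>s. Ov s p1 p2 p3 p4) t" using assms unfolding Ev_def by blast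
  show ?thesis
  proof (cases "eventually (\<lambda>s. Ov s p1 p2 p3 p4) (at_left t)")
    case True
    have c: "Cl t p1 p2 p3 p4" using closure[OF t _ True] by simp
    thus ?thesis using True e ClD(1,2,4)[OF c] by auto
  next
    case False
    have R: "eventually (\<lambda>s. Ov s p1 p2 p3 p4) (at_right t)" using ev_cre[OF s False] .
    have cc: "(\<exists>v. C1 t p1 p2 v) \<or> (\<exists>v. C2 t p3 p4 v)"
      using cre_class[OF t R False] unfolding C1_def C2_def by blast
    show ?thesis
    proof (cases "\<exists>v. C1 t p1 p2 v")
      case True
      hence "C1 t p1 p2 (SOME v. C1 t p1 p2 v)" by (rule someI_ex)
      hence "(SOME v. C1 t p1 p2 v) \<in> P" unfolding C1_def by blast
      moreover have "key e = (3, SOME v. C1 t p1 p2 v)" using True False e by simp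
      ultimately show ?thesis by simp
    next
      case F1: False
      hence "\<exists>v. C2 t p3 p4 v" using cc by blast
      hence "C2 t p3 p4 (SOME v. C2 t p3 p4 v)" by (rule someI_ex)
      hence "(SOME v. C2 t p3 p4 v) \<in> P" unfolding C2_def by blast
      moreover have "key e = (4, SOME v. C2 t p3 p4 v)" using F1 False e by simp
      ultimately show ?thesis by simp
    qed
  qed
qed

lemma key_inj: "inj_on key Ev"
proof (rule inj_onI)
  fix e e' assume e: "e \<in> Ev" and e': "e' \<in> Ev" and k: "key e = key e'"
  obtain t p1 p2 p3 p4 where ee: "e = (t, p1, p2, p3, p4)" and t: "0 < t" "t < pi"
    and s: "sw (\<lambda>s. Ov s p1 p2 p3 p4) t" using e unfolding Ev_def by blast
  obtain t' q1 q2 q3 q4 where ee': "e' = (t', q1, q2, q3, q4)" and t': "0 < t'" "t' < pi"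
    and s': "sw (\<lambda>s. Ov s q1 q2 q3 q4) t'" using e' unfolding Ev_def by blast
  note k = k[unfolded ee ee']
  show "e = e'"
  proof (cases "eventually (\<lambda>s. Ov s p1 p2 p3 p4) (at_left t)")
    case L: True
    have nR: "\<not> eventually (\<lambda>s. Ov s p1 p2 p3 p4) (at_right t)" using ev_rel[OF s L] .
    have cls: "F \<sigma> t p2 = F \<sigma> t p4 \<or> (\<exists>u\<in>P. snd p2 < snd u \<and> F \<sigma> t u = F \<sigma> t p2)
         \<or> (\<exists>w\<in>P. snd w < snd p4 \<and> F \<sigma> t w = F \<sigma> t p4)" using rel_class[OF t L nR] .
    have L': "eventually (\<lambda>s. Ov s q1 q2 q3 q4) (at_left t')"
    proof (rule ccontr)
      assume "\<not> ?thesis"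
      hence "fst (key (t', q1, q2, q3, q4)) \<ge> 3" by auto
      moreover have "fst (key (t, p1, p2, p3, p4)) \<le> 2" using L by auto
      ultimately show False using k by simp
    qed
    have nR': "\<not> eventually (\<lambda>s. Ov s q1 q2 q3 q4) (at_right t')" using ev_rel[OF s' L'] .
    have cls': "F \<sigma> t' q2 = F \<sigma> t' q4 \<or> (\<exists>u\<in>P. snd q2 < snd u \<and> F \<sigma> t' u = F \<sigma> t' q2)
         \<or> (\<exists>w\<in>P. snd w < snd q4 \<and> F \<sigma> t' w = F \<sigma> t' q4)" using rel_class[OF t' L' nR'] .
    show ?thesis
    proof (cases "F \<sigma> t p2 = F \<sigma> t p4")
      case True
      hence "key (t, p1, p2, p3, p4) = (0, p1)" using L by simp
      hence K: "F \<sigma> t' q2 = F \<sigma> t' q4 \<and> q1 = p1" using k L' by (auto split: if_splits)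
      have L'': "eventually (\<lambda>s. Ov s p1 q2 q3 q4) (at_left t')" using L' K by simp
      have "t = t' \<and> p2 = q2 \<and> p3 = q3 \<and> p4 = q4" using inj_R3[OF t t' L L'' True] K by blast
      thus ?thesis using ee ee' K by simp
    next
      case n3: False
      show ?thesis
      proof (cases "\<exists>u\<in>P. snd p2 < snd u \<and> F \<sigma> t u = F \<sigma> t p2")
        case True
        hence "key (t, p1, p2, p3, p4) = (1, p2)" using L n3 by simp
        hence K: "F \<sigma> t' q2 \<noteq> F \<sigma> t' q4" "\<exists>u\<in>P. snd q2 < snd u \<and> F \<sigma> t' u = F \<sigma> t' q2" "q2 = p2"
          using k L' by (auto split: if_splits)
        obtain u where u: "u \<in> P" "snd p2 < snd u" "F \<sigma> t u = F \<sigma> t p2" using True by blast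
        obtain u' where u': "u' \<in> P" "snd p2 < snd u'" "F \<sigma> t' u' = F \<sigma> t' p2" using K by blast
        have L'': "eventually (\<lambda>s. Ov s q1 p2 q3 q4) (at_left t')" using L' K(3) by simp
        have "t = t' \<and> p1 = q1 \<and> p3 = q3 \<and> p4 = q4" using inj_R1[OF t t' L L'' u u'] .
        thus ?thesis using ee ee' K(3) by simp
      next
        case n1: False
        hence "key (t, p1, p2, p3, p4) = (2, p4)" using L n3 by simp
        hence K: "F \<sigma> t' q2 \<noteq> F \<sigma> t' q4" "\<not> (\<exists>u\<in>P. snd q2 < snd u \<and> F \<sigma> t' u = F \<sigma> t' q2)" "q4 = p4"
          using k L' by (auto split: if_splits)
        obtain w where w: "w \<in> P" "snd w < snd p4" "F \<sigma> t w = F \<sigma> t p4" using cls n3 n1 by blast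
        obtain w' where w': "w' \<in> P" "snd w' < snd p4" "F \<sigma> t' w' = F \<sigma> t' p4" using cls' K by blast
        have L'': "eventually (\<lambda>s. Ov s q1 q2 q3 p4) (at_left t')" using L' K(3) by simp
        have "t = t' \<and> p1 = q1 \<and> p2 = q2 \<and> p3 = q3" using inj_R2[OF t t' L L'' w w'] .
        thus ?thesis using ee ee' K(3) by simp
      qed
    qed
  next
    case nL: False
    have R: "eventually (\<lambda>s. Ov s p1 p2 p3 p4) (at_right t)" using ev_cre[OF s nL] .
    have cc: "(\<exists>v. C1 t p1 p2 v) \<or> (\<exists>v. C2 t p3 p4 v)"
      using cre_class[OF t R nL] unfolding C1_def C2_def by blast
    have nL': "\<not> eventually (\<lambda>s. Ov s q1 q2 q3 q4) (at_left t')"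
    proof
      assume L': "eventually (\<lambda>s. Ov s q1 q2 q3 q4) (at_left t')"
      hence "fst (key (t', q1, q2, q3, q4)) \<le> 2" by auto
      moreover have "fst (key (t, p1, p2, p3, p4)) \<ge> 3" using nL by auto
      ultimately show False using k by simp
    qed
    have R': "eventually (\<lambda>s. Ov s q1 q2 q3 q4) (at_right t')" using ev_cre[OF s' nL'] .
    have cc': "(\<exists>v. C1 t' q1 q2 v) \<or> (\<exists>v. C2 t' q3 q4 v)"
      using cre_class[OF t' R' nL'] unfolding C1_def C2_def by blast
    show ?thesis
    proof (cases "\<exists>v. C1 t p1 p2 v")
      case True
      define v where "v = (SOME v. C1 t p1 p2 v)"
      have v: "C1 t p1 p2 v" unfolding v_def using True by (rule someI_ex)
      have "key (t, p1, p2, p3, p4) = (3, v)" using nL True v_def by simp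
      hence K: "\<exists>v. C1 t' q1 q2 v" "v = (SOME v. C1 t' q1 q2 v)" using k nL' by (auto split: if_splits)
      have v': "C1 t' q1 q2 v" using someI_ex[OF K(1)] K(2) by simp
      have "t = t' \<and> p1 = q1 \<and> p2 = q2 \<and> p3 = q3 \<and> p4 = q4"
        using v v' unfolding C1_def by (intro inj_C1[OF t t' R R']) blast+
      thus ?thesis using ee ee' by simp
    next
      case F1: False
      hence "\<exists>v. C2 t p3 p4 v" using cc by blast
      define v where "v = (SOME v. C2 t p3 p4 v)"
      have v: "C2 t p3 p4 v" unfolding v_def using \<open>\<exists>v. C2 t p3 p4 v\<close> by (rule someI_ex)
      have "key (t, p1, p2, p3, p4) = (4, v)" using nL F1 v_def by simp
      hence K: "\<not> (\<exists>v. C1 t' q1 q2 v)" "v = (SOME v. C2 t' q3 q4 v)" using k nL' by (auto split: if_splits)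
      have "\<exists>v. C2 t' q3 q4 v" using cc' K(1) by blast
      hence "C2 t' q3 q4 (SOME v. C2 t' q3 q4 v)" by (rule someI_ex)
      hence v': "C2 t' q3 q4 v" using K(2) by simp
      have "t = t' \<and> p1 = q1 \<and> p2 = q2 \<and> p3 = q3 \<and> p4 = q4"
        using v v' unfolding C2_def by (intro inj_C2[OF t t' R R']) blast+
      thus ?thesis using ee ee' by simp
    qed
  qed
qed

lemma Ev_card: "finite Ev \<and> card Ev \<le> 5 * card P"
proof -
  have fin2: "finite ({0..4::nat} \<times> P)" using fin by simp
  have sub: "key ` Ev \<subseteq> {0..4} \<times> P" using key_range by blast
  have "finite Ev" using inj_on_finite[OF key_inj sub fin2] .
  moreover have "card Ev \<le> card ({0..4::nat} \<times> P)" using card_inj_on_le[OF key_inj sub fin2] .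
  moreover have "card ({0..4::nat} \<times> P) = 5 * card P" by (simp add: card_cartesian_product)
  ultimately show ?thesis by simp
qed

end


lemma sw_cong:
  assumes t: "0 < t" "t < pi" and eq: "\<And>s. 0 < s \<Longrightarrow> s < pi \<Longrightarrow> M s = N s"
  shows "sw M t = sw N t"
proof -
  have l: "eventually (\<lambda>s. 0 < s \<and> s < pi) (at_left t)"
    using ev_left_pos[OF t(1)] t(2) by (auto elim: eventually_mono)
  have r: "eventually (\<lambda>s. 0 < s \<and> s < pi) (at_right t)"
    using ev_right_pi[OF t(2)] t(1) by (auto elim: eventually_mono)
  have e1: "eventually M (at_left t) = eventually N (at_left t)"
    by (rule eventually_cong[OF l]) (simp add: eq)
  have e2: "eventually (\<lambda>s. \<not> M s) (at_left t) = eventually (\<lambda>s. \<not> N s) (at_left t)"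
    by (rule eventually_cong[OF l]) (simp add: eq)
  have e3: "eventually M (at_right t) = eventually N (at_right t)"
    by (rule eventually_cong[OF r]) (simp add: eq)
  have e4: "eventually (\<lambda>s. \<not> M s) (at_right t) = eventually (\<lambda>s. \<not> N s) (at_right t)"
    by (rule eventually_cong[OF r]) (simp add: eq)
  show ?thesis unfolding sw_def e1 e2 e3 e4 ..
qed

lemma ev_refl_left:
  assumes "eventually M (at_left (t::real))"
  shows "eventually (\<lambda>s. M (pi - s)) (at_right (pi - t))"
proof -
  obtain b where b: "b < t" "\<forall>y>b. y < t \<longrightarrow> M y" using assms unfolding eventually_at_left_field by blast
  have "\<forall>y>pi - t. y < pi - b \<longrightarrow> M (pi - y)"
  proof (intro allI impI)
    fix y assume "pi - t < y" "y < pi - b"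
    hence "b < pi - y" "pi - y < t" by linarith+
    thus "M (pi - y)" using b(2) by blast
  qed
  moreover have "pi - t < pi - b" using b(1) by linarith
  ultimately show ?thesis unfolding eventually_at_right_field by blast
qed

lemma ev_refl_right:
  assumes "eventually M (at_right (t::real))"
  shows "eventually (\<lambda>s. M (pi - s)) (at_left (pi - t))"
proof -
  obtain b where b: "t < b" "\<forall>y>t. y < b \<longrightarrow> M y" using assms unfolding eventually_at_right_field by blast
  have "\<forall>y>pi - b. y < pi - t \<longrightarrow> M (pi - y)"
  proof (intro allI impI)
    fix y assume "pi - b < y" "y < pi - t"
    hence "t < pi - y" "pi - y < b" by linarith+
    thus "M (pi - y)" using b(2) by blast
  qed
  moreover have "pi - b < pi - t" using b(1) by linarith
  ultimately show ?thesis unfolding eventually_at_left_field by blast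
qed

lemma sw_refl:
  assumes "sw M t" shows "sw (\<lambda>s. M (pi - s)) (pi - t)"
  using assms unfolding sw_def
proof
  assume "eventually (\<lambda>s. \<not> M s) (at_left t) \<and> eventually M (at_right t)"
  hence "eventually (\<lambda>s. \<not> M (pi - s)) (at_right (pi - t)) \<and> eventually (\<lambda>s. M (pi - s)) (at_left (pi - t))"
    using ev_refl_left[of "\<lambda>s. \<not> M s" t] ev_refl_right[of M t] by blast
  thus "(eventually (\<lambda>s. \<not> M (pi - s)) (at_left (pi - t)) \<and> eventually (\<lambda>s. M (pi - s)) (at_right (pi - t))) \<or>
    (eventually (\<lambda>s. M (pi - s)) (at_left (pi - t)) \<and> eventually (\<lambda>s. \<not> M (pi - s)) (at_right (pi - t)))" by blast
next
  assume "eventually M (at_left t) \<and> eventually (\<lambda>s. \<not> M s) (at_right t)"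
  hence "eventually (\<lambda>s. M (pi - s)) (at_right (pi - t)) \<and> eventually (\<lambda>s. \<not> M (pi - s)) (at_left (pi - t))"
    using ev_refl_left[of M t] ev_refl_right[of "\<lambda>s. \<not> M s" t] by blast
  thus "(eventually (\<lambda>s. \<not> M (pi - s)) (at_left (pi - t)) \<and> eventually (\<lambda>s. M (pi - s)) (at_right (pi - t))) \<or>
    (eventually (\<lambda>s. M (pi - s)) (at_left (pi - t)) \<and> eventually (\<lambda>s. \<not> M (pi - s)) (at_right (pi - t)))" by blast
qed

lemma sw_false:
  assumes "sw (\<lambda>s. False) t" shows False
  using assms unfolding sw_def by simp

lemma sw_not: "sw (\<lambda>s. \<not> M s) t = sw M t"
  unfolding sw_def by (simp only: not_not) blast

lemma sw_down_unique:
  assumes dc: "\<And>t1 t2. 0 < t1 \<Longrightarrow> t1 < t2 \<Longrightarrow> t2 < pi \<Longrightarrow> M t2 \<Longrightarrow> M t1"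
  shows "0 < t \<Longrightarrow> t < pi \<Longrightarrow> 0 < t' \<Longrightarrow> t' < pi \<Longrightarrow> sw M t \<Longrightarrow> sw M t' \<Longrightarrow> t = t'"
proof -
  have dir: "eventually M (at_left t) \<and> eventually (\<lambda>s. \<not> M s) (at_right t)"
    if t: "0 < t" "t < pi" and s: "sw M t" for t
  proof -
    have False if h: "eventually (\<lambda>s. \<not> M s) (at_left t)" "eventually M (at_right t)"
    proof -
      obtain s1 where s1: "\<not> M s1" "0 < s1" "s1 < t"
        using eventually_happens[OF eventually_conj[OF h(1) ev_left_pos[OF t(1)]]] by auto
      obtain s2 where s2: "M s2" "t < s2" "s2 < pi"
        using eventually_happens[OF eventually_conj[OF h(2) ev_right_pi[OF t(2)]]] by auto
      show False using dc[OF s1(2) _ s2(3) s2(1)] s1 s2 by linarith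
    qed
    thus ?thesis using s unfolding sw_def by blast
  qed
  have lt: False if t: "0 < t" "t < pi" "0 < t'" "t' < pi" "sw M t" "sw M t'" "t < t'" for t t'
  proof -
    obtain b where b: "t < b" "\<forall>y>t. y < b \<longrightarrow> \<not> M y"
      using conjunct2[OF dir[OF t(1,2,5)]] unfolding eventually_at_right_field by blast
    obtain a where a: "a < t'" "\<forall>y>a. y < t' \<longrightarrow> M y"
      using conjunct1[OF dir[OF t(3,4,6)]] unfolding eventually_at_left_field by blast
    obtain m where m1: "a \<le> m" "t \<le> m" "m < t'"
      using a(1) t(7) by (metis max.cobounded1 max.cobounded2 max_less_iff_conj)
    define s2 where "s2 = (m + t') / 2"
    have e2: "2 * s2 = m + t'" unfolding s2_def by simp
    have s2a: "a < s2" using m1 e2 by linarith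
    have s2b: "s2 < t'" using m1 e2 by linarith
    have s2c: "t < s2" using m1 e2 by linarith
    note s2 = s2a s2b s2c
    obtain n where m2: "n \<le> b" "n \<le> s2" "t < n"
      using b(1) s2(3) by (metis min.cobounded1 min.cobounded2 min_less_iff_conj less_le_not_le not_le_imp_less min_def)
    define s1 where "s1 = (t + n) / 2"
    have e1: "2 * s1 = t + n" unfolding s1_def by simp
    have s1a: "t < s1" using m2 e1 by linarith
    have s1b: "s1 < b" using m2 b(1) e1 by linarith
    have s1c: "s1 < s2" using m2 e1 by linarith
    note s1 = s1a s1b s1c
    have "M s2" using a(2) s2 by blast
    moreover have "\<not> M s1" using b(2) s1 by blast
    moreover have "0 < s1" using t s1 s2 by linarith
    moreover have "s2 < pi" using t s1 s2 by linarith
    ultimately show False using dc[of s1 s2] s1 by blast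
  qed
  show "0 < t \<Longrightarrow> t < pi \<Longrightarrow> 0 < t' \<Longrightarrow> t' < pi \<Longrightarrow> sw M t \<Longrightarrow> sw M t' \<Longrightarrow> t = t'"
    using lt[of t t'] lt[of t' t] by (metis not_less_iff_gr_or_eq)
qed

lemma stair_iff:
  assumes "0 < b" "b < pi"
  shows "p \<in> stair P b q \<longleftrightarrow> p \<in> P \<and>
    (\<forall>r\<in>P. \<not> (0 < sgn_s q * (F 1 b r - F 1 b p) \<and> 0 < sgn_t q * (snd r - snd p)))"
  unfolding stair_def pfree_def using quad_iff[OF assms] by blast

lemma stair_mono:
  assumes t: "0 < t1" "t1 < t2" "t2 < pi"
  shows "q \<in> {TR, BL} \<Longrightarrow> p \<in> stair P t2 q \<Longrightarrow> p \<in> stair P t1 q"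
    and "q \<in> {TL, BR} \<Longrightarrow> p \<in> stair P t1 q \<Longrightarrow> p \<in> stair P t2 q"
proof -
  have t1: "0 < t1" "t1 < pi" and t2: "0 < t2" "t2 < pi" using t by auto
  have M: "\<And>u v. snd v < snd u \<Longrightarrow> F 1 t1 u - F 1 t1 v < F 1 t2 u - F 1 t2 v"
    using F_mono t by blast
  show "q \<in> {TR, BL} \<Longrightarrow> p \<in> stair P t2 q \<Longrightarrow> p \<in> stair P t1 q"
  proof -
    assume q: "q \<in> {TR, BL}" and p: "p \<in> stair P t2 q"
    have "\<not> (0 < sgn_s q * (F 1 t1 r - F 1 t1 p) \<and> 0 < sgn_t q * (snd r - snd p))" if r: "r \<in> P" for r
    proof
      assume h: "0 < sgn_s q * (F 1 t1 r - F 1 t1 p) \<and> 0 < sgn_t q * (snd r - snd p)"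
      have "0 < sgn_s q * (F 1 t2 r - F 1 t2 p) \<and> 0 < sgn_t q * (snd r - snd p)"
        using q h M[of p r] M[of r p] by auto
      thus False using p r unfolding stair_iff[OF t2] by blast
    qed
    thus ?thesis using p unfolding stair_iff[OF t1] stair_iff[OF t2] by blast
  qed
  show "q \<in> {TL, BR} \<Longrightarrow> p \<in> stair P t1 q \<Longrightarrow> p \<in> stair P t2 q"
  proof -
    assume q: "q \<in> {TL, BR}" and p: "p \<in> stair P t1 q"
    have "\<not> (0 < sgn_s q * (F 1 t2 r - F 1 t2 p) \<and> 0 < sgn_t q * (snd r - snd p))" if r: "r \<in> P" for r
    proof
      assume h: "0 < sgn_s q * (F 1 t2 r - F 1 t2 p) \<and> 0 < sgn_t q * (snd r - snd p)"
      have "0 < sgn_s q * (F 1 t1 r - F 1 t1 p) \<and> 0 < sgn_t q * (snd r - snd p)"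
        using q h M[of p r] M[of r p] by auto
      thus False using p r unfolding stair_iff[OF t1] by blast
    qed
    thus ?thesis using p unfolding stair_iff[OF t1] stair_iff[OF t2] by blast
  qed
qed

lemma insdel_unique:
  assumes "0 < t" "t < pi" "0 < t'" "t' < pi"
    "sw (\<lambda>b. p \<in> stair P b q) t" "sw (\<lambda>b. p \<in> stair P b q) t'"
  shows "t = t'"
proof (cases "q \<in> {TR, BL}")
  case True
  show ?thesis
    by (rule sw_down_unique[OF _ assms]) (use stair_mono(1)[OF _ _ _ True] in blast)
next
  case False
  hence q: "q \<in> {TL, BR}" by (cases q) auto
  have "sw (\<lambda>b. p \<notin> stair P b q) t" "sw (\<lambda>b. p \<notin> stair P b q) t'"
    using assms(5,6) sw_not by auto
  thus ?thesis
    by (intro sw_down_unique[of "\<lambda>b. p \<notin> stair P b q"] assms(1-4)) (use stair_mono(2)[OF _ _ _ q] in blast)+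
qed

lemma qtype_UNIV: "(UNIV :: qtype set) = {TR, TL, BR, BL}"
  using qtype.exhaust by auto

lemma insdel_bound:
  assumes fin: "finite P"
  shows "finite (insdel_events P) \<and> card (insdel_events P) \<le> 4 * card P"
proof -
  define f where "f = (\<lambda>(b::real, p::pt, q::qtype). (p, q))"
  have E: "insdel_events P = {(b, p, q) | b p q. 0 < b \<and> b < pi \<and> p \<in> P \<and> sw (\<lambda>b. p \<in> stair P b q) b}"
    unfolding insdel_events_def sw_def by simp
  have inj: "inj_on f (insdel_events P)"
    unfolding E by (rule inj_onI) (auto simp: f_def dest: insdel_unique)
  have sub: "f ` insdel_events P \<subseteq> P \<times> UNIV" unfolding E f_def by auto
  have fin2: "finite (P \<times> (UNIV :: qtype set))" using fin by (simp add: qtype_UNIV)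
  have c: "card (P \<times> (UNIV :: qtype set)) = 4 * card P"
    by (simp add: card_cartesian_product qtype_UNIV)
  show ?thesis using inj_on_finite[OF inj sub fin2] card_inj_on_le[OF inj sub fin2] c by simp
qed



lemma ovrel_sub:
  assumes fin: "finite P" and gp: "general_pos P"
  shows "ovrel_events P \<subseteq>
     (\<lambda>(t, p1, p2, p3, p4). (t, (TR, p1, p2, p3, p4))) ` core.Ev 1 P \<union>
     (\<lambda>(t, p1, p2, p3, p4). (pi - t, (TL, p1, p2, p3, p4))) ` core.Ev (-1) P"
proof
  have c1: "core 1 P" and c2: "core (-1) P" using fin gp by (auto intro: core.intro)
  fix e assume "e \<in> ovrel_events P"
  then obtain b q p1 p2 p3 p4 where e: "e = (b, (q, p1, p2, p3, p4))" and b: "0 < b" "b < pi"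
    and s: "sw (\<lambda>s. (q, p1, p2, p3, p4) \<in> overlaps P s) b"
    unfolding ovrel_events_def sw_def by auto
  have ov: "\<And>s. 0 < s \<Longrightarrow> s < pi \<Longrightarrow> ((q, p1, p2, p3, p4) \<in> overlaps P s) =
     ((q = TR \<and> OvF (F 1 s) P p1 p2 p3 p4) \<or> (q = TL \<and> OvF (\<lambda>p. - F 1 s p) P p1 p2 p3 p4))"
    using overlaps_iff by blast
  show "e \<in> (\<lambda>(t, p1, p2, p3, p4). (t, (TR, p1, p2, p3, p4))) ` core.Ev 1 P \<union>
     (\<lambda>(t, p1, p2, p3, p4). (pi - t, (TL, p1, p2, p3, p4))) ` core.Ev (-1) P"
  proof (cases q)
    case TR
    have "sw (\<lambda>s. OvF (F 1 s) P p1 p2 p3 p4) b"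
      using s sw_cong[OF b, of "\<lambda>s. (q, p1, p2, p3, p4) \<in> overlaps P s"] ov TR by simp
    hence "(b, p1, p2, p3, p4) \<in> core.Ev 1 P" using b unfolding core.Ev_def[OF c1] by blast
    thus ?thesis using e TR by force
  next
    case TL
    have fr: "(\<lambda>p. - F 1 s p) = F (-1) (pi - s)" for s using F_cot_reflect by auto
    have "sw (\<lambda>s. OvF (F (-1) (pi - s)) P p1 p2 p3 p4) b"
      using s sw_cong[OF b, of "\<lambda>s. (q, p1, p2, p3, p4) \<in> overlaps P s"] ov TL fr by simp
    hence "sw (\<lambda>s. OvF (F (-1) s) P p1 p2 p3 p4) (pi - b)" using sw_refl by fastforce
    moreover have "0 < pi - b" "pi - b < pi" using b by auto
    ultimately have "(pi - b, p1, p2, p3, p4) \<in> core.Ev (-1) P" unfolding core.Ev_def[OF c2] by blast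
    moreover have "e = (pi - (pi - b), (TL, p1, p2, p3, p4))" using e TL by simp
    ultimately show ?thesis by force
  next
    case BR
    have "sw (\<lambda>s. False) b"
      using s sw_cong[OF b, of "\<lambda>s. (q, p1, p2, p3, p4) \<in> overlaps P s"] ov BR by simp
    thus ?thesis using sw_false by blast
  next
    case BL
    have "sw (\<lambda>s. False) b"
      using s sw_cong[OF b, of "\<lambda>s. (q, p1, p2, p3, p4) \<in> overlaps P s"] ov BL by simp
    thus ?thesis using sw_false by blast
  qed
qed

lemma ovrel_bound:
  assumes fin: "finite P" and gp: "general_pos P"
  shows "finite (ovrel_events P) \<and> card (ovrel_events P) \<le> 10 * card P"
proof -
  have c1: "core 1 P" and c2: "core (-1) P" using fin gp by (auto intro: core.intro)
  have E1: "finite (core.Ev 1 P) \<and> card (core.Ev 1 P) \<le> 5 * card P" using core.Ev_card[OF c1] .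
  have E2: "finite (core.Ev (-1) P) \<and> card (core.Ev (-1) P) \<le> 5 * card P" using core.Ev_card[OF c2] .
  define A where "A = (\<lambda>(t, p1, p2, p3, p4). (t, (TR, p1, p2, p3, p4))) ` core.Ev 1 P"
  define B where "B = (\<lambda>(t::real, p1::pt, p2::pt, p3::pt, p4::pt). (pi - t, (TL, p1, p2, p3, p4))) ` core.Ev (-1) P"
  have fA: "finite A" unfolding A_def using E1 by simp
  have "card A \<le> card (core.Ev 1 P)" unfolding A_def using E1 card_image_le by blast
  hence fA2: "card A \<le> 5 * card P" using E1 by linarith
  have fB: "finite B" unfolding B_def using E2 by simp
  have "card B \<le> card (core.Ev (-1) P)" unfolding B_def using E2 card_image_le by blast
  hence fB2: "card B \<le> 5 * card P" using E2 by linarith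
  have sub: "ovrel_events P \<subseteq> A \<union> B" using ovrel_sub[OF fin gp] unfolding A_def B_def .
  have "finite (A \<union> B)" using fA fB by simp
  moreover have "card (A \<union> B) \<le> 10 * card P" using card_Un_le[of A B] fA2 fB2 by linarith
  ultimately show ?thesis using sub card_mono[OF _ sub] finite_subset[OF sub] by fastforce
qed

theorem lemma1:
  shows "\<exists>C::real. \<forall>P::pt set. finite P \<and> general_pos P \<longrightarrow>
           finite (insdel_events P) \<and> finite (ovrel_events P) \<and>
           real (card (insdel_events P) + card (ovrel_events P)) \<le> C * real (card P)"
proof (intro exI[of _ 14] allI impI)
  fix P :: "pt set" assume h: "finite P \<and> general_pos P"
  have a: "finite (insdel_events P) \<and> card (insdel_events P) \<le> 4 * card P"
    using insdel_bound h by blast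
  have b: "finite (ovrel_events P) \<and> card (ovrel_events P) \<le> 10 * card P"
    using ovrel_bound h by blast
  have "card (insdel_events P) + card (ovrel_events P) \<le> 14 * card P" using a b by linarith
  hence "real (card (insdel_events P) + card (ovrel_events P)) \<le> real (14 * card P)"
    by (simp only: of_nat_le_iff)
  thus "finite (insdel_events P) \<and> finite (ovrel_events P) \<and>
           real (card (insdel_events P) + card (ovrel_events P)) \<le> 14 * real (card P)"
    using a b by simp
qed


end
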